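(* Let $(\mathbf{i},\kappa)$ be an idempotent datum as in the context. Then $(\mathbf{i},\kappa)$ admits a compatible metric longitude if and only if it is a parity idempotent datum.
   Context: $I$ is the vertex set of a finite simple bipartite graph, $I=I_{\bar0}\sqcup I_{\bar1}$; an integer $k$ has the parity of $i$ if $k\bmod2$ equals the parity of $i$. Fix a total order $v_1<\dots<v_r$ on $I$ with all even vertices first. Let $\mathbf{R}=(R_i)_{i\in I}$ where $R_i$ is a finite multiset of integers of the parity of $i$ ($\lambda_i=|R_i|$, $\ell=\sum_i\lambda_i$). With $\rho_i(q)$ the multiplicity of $2q$ (i even) or $2q+1$ (i odd) in $R_i$, form the sequence of labels $(j_1,\dots,j_\ell)$ as the concatenation over increasing $q\in\mathbb{Z}$ of blocks ($v_1$ repeated $\rho_{v_1}(q)$ times, …, $v_r$ repeated $\rho_{v_r}(q)$ times); the $p$-th red strand has label $j_p$ and longitude $r_p$, the corresponding element of $R_{j_p}$ (so $r_1\le\dots\le r_\ell$). An idempotent datum is $(\mathbf{i},\kappa)$ with $\mathbf{i}=(i_1,\dots,i_n)\in I^n$ (labels of black strands) and $\kappa:\{1,\dots,\ell\}\to\{0,\dots,n\}$ weakly increasing; it describes a left-to-right sequence of strands in which red strand $p$ lies between the $\kappa(p)$-th and $(\kappa(p)+1)$-st black strands. Each strand has the parity of its label. Parity distance: for consecutive strands $s$ left of $s'$, $\delta(s,s')=2$ if $s$ is black, $s'$ is red and they have the same parity; $1$ if they have different parities; $0$ otherwise; for $s$ left of $s'$ non-consecutive, $\delta(s,s')$ is the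 sum over consecutive pairs between them. $(\mathbf{i},\kappa)$ is parity if $\delta(p,p')\le|r_p-r_{p'}|$ for every pair of red strands $p$ left of $p'$. A compatible metric longitude is $\mathbf{a}=(a_1,\dots,a_n)\in\mathbb{Z}^n$ with (1) $a_k$ of the parity of $i_k$, (2) $a_k\le a_{k+1}$, (3) for all $k,p$: $a_k\ge r_p$ if and only if $k>\kappa(p)$. *)

theory Defs
  imports Main "HOL-Library.Multiset"
begin

text \<open>Vertex parity is given by a predicate par :: 'v => bool, par v = True meaning v is odd.
  An integer x has the parity of v iff (odd x = par v).\<close>

definition par_int :: "bool \<Rightarrow> int" where
  "par_int b = (if b then 1 else 0)"

text \<open>The range [-N..N] of q covers every q with a nonempty block.\<close>
definition red_list :: "('v \<Rightarrow> bool) \<Rightarrow> 'v list \<Rightarrow> ('v \<Rightarrow> int multiset) \<Rightarrow> ('v \<times> int) list" where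
  "red_list par vs R =
     (let N = sum_list (map (\<lambda>v. sum_mset (image_mset abs (R v))) vs) in
      concat (map (\<lambda>q. concat (map (\<lambda>v.
          replicate (count (R v) (2 * q + par_int (par v))) (v, 2 * q + par_int (par v))) vs))
        [-N..N]))"

text \<open>Label j_p and longitude r_p of the p-th red strand (1-based).\<close>
definition red_lab :: "('v \<Rightarrow> bool) \<Rightarrow> 'v list \<Rightarrow> ('v \<Rightarrow> int multiset) \<Rightarrow> nat \<Rightarrow> 'v" where
  "red_lab par vs R p = fst (red_list par vs R ! (p - 1))"

definition red_lon :: "('v \<Rightarrow> bool) \<Rightarrow> 'v list \<Rightarrow> ('v \<Rightarrow> int multiset) \<Rightarrow> nat \<Rightarrow> int" where
  "red_lon par vs R p = snd (red_list par vs R ! (p - 1))"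

definition ell :: "'v set \<Rightarrow> ('v \<Rightarrow> int multiset) \<Rightarrow> nat" where
  "ell I R = (\<Sum>v\<in>I. size (R v))"

datatype strand = Blk nat | Rd nat

text \<open>Left-to-right sequence of strands: red strand p lies between the kappa(p)-th and
  (kappa(p)+1)-st black strands (black strands numbered 1..n).\<close>
definition strand_seq :: "nat \<Rightarrow> nat \<Rightarrow> (nat \<Rightarrow> nat) \<Rightarrow> strand list" where
  "strand_seq n l \<kappa> =
     concat (map (\<lambda>k. map Rd (filter (\<lambda>p. \<kappa> p = k) [1..<l+1]) @ (if k < n then [Blk (k+1)] else []))
       [0..<n+1])"

definition strand_par :: "('v \<Rightarrow> bool) \<Rightarrow> 'v list \<Rightarrow> (nat \<Rightarrow> 'v) \<Rightarrow> strand \<Rightarrow> bool" where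
  "strand_par par is lab s = (case s of Blk k \<Rightarrow> par (is ! (k - 1)) | Rd p \<Rightarrow> par (lab p))"

definition delta_consec :: "('v \<Rightarrow> bool) \<Rightarrow> 'v list \<Rightarrow> (nat \<Rightarrow> 'v) \<Rightarrow> strand \<Rightarrow> strand \<Rightarrow> nat" where
  "delta_consec par is lab s s' =
     (if (\<exists>k. s = Blk k) \<and> (\<exists>p. s' = Rd p) \<and> strand_par par is lab s = strand_par par is lab s' then 2
      else if strand_par par is lab s \<noteq> strand_par par is lab s' then 1 else 0)"

definition strand_pos :: "strand list \<Rightarrow> strand \<Rightarrow> nat" where
  "strand_pos sq s = (LEAST a. a < length sq \<and> sq ! a = s)"

definition delta_red :: "('v \<Rightarrow> bool) \<Rightarrow> 'v list \<Rightarrow> (nat \<Rightarrow> 'v) \<Rightarrow> strand list \<Rightarrow> nat \<Rightarrow> nat \<Rightarrow> nat" where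
  "delta_red par is lab sq p p' =
     (\<Sum>a\<in>{strand_pos sq (Rd p)..<strand_pos sq (Rd p')}. delta_consec par is lab (sq ! a) (sq ! (a+1)))"

definition is_parity_datum ::
  "'v set \<Rightarrow> ('v \<Rightarrow> bool) \<Rightarrow> 'v list \<Rightarrow> ('v \<Rightarrow> int multiset) \<Rightarrow> 'v list \<Rightarrow> (nat \<Rightarrow> nat) \<Rightarrow> bool" where
  "is_parity_datum I par vs R is \<kappa> =
     (\<forall>p p'. 1 \<le> p \<and> p < p' \<and> p' \<le> ell I R \<longrightarrow>
        int (delta_red par is (red_lab par vs R) (strand_seq (length is) (ell I R) \<kappa>) p p')
          \<le> \<bar>red_lon par vs R p - red_lon par vs R p'\<bar>)"

text \<open>Compatible metric longitude a = (a_1..a_n), stored 0-based as a list (a ! (k-1) = a_k).\<close>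
definition compatible_longitude ::
  "'v set \<Rightarrow> ('v \<Rightarrow> bool) \<Rightarrow> 'v list \<Rightarrow> ('v \<Rightarrow> int multiset) \<Rightarrow> 'v list \<Rightarrow> (nat \<Rightarrow> nat) \<Rightarrow> int list \<Rightarrow> bool" where
  "compatible_longitude I par vs R is \<kappa> a =
     (length a = length is \<and>
      (\<forall>k < length is. odd (a ! k) = par (is ! k)) \<and>
      (\<forall>k. k + 1 < length is \<longrightarrow> a ! k \<le> a ! (k+1)) \<and>
      (\<forall>k p. 1 \<le> k \<and> k \<le> length is \<and> 1 \<le> p \<and> p \<le> ell I R \<longrightarrow>
          (a ! (k-1) \<ge> red_lon par vs R p \<longleftrightarrow> k > \<kappa> p)))"

end

theory Submission
  imports Defs
begin

lemma sorted_wrt_concatI: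
  assumes "\<forall>xs\<in>set xss. sorted_wrt P xs"
    and "\<forall>i j. i < j \<and> j < length xss \<longrightarrow> (\<forall>x\<in>set (xss!i). \<forall>y\<in>set (xss!j). P x y)"
  shows "sorted_wrt P (concat xss)"
  using assms
proof (induction xss)
  case Nil then show ?case by simp
next
  case (Cons xs xss)
  have "sorted_wrt P (concat xss)"
    apply (rule Cons.IH)
    using Cons.prems(1) apply simp
    using Cons.prems(2) by (metis Suc_less_eq length_Cons nth_Cons_Suc)
  moreover have "\<forall>x\<in>set xs. \<forall>y\<in>set (concat xss). P x y"
  proof (intro ballI)
    fix x y assume x: "x \<in> set xs" and y: "y \<in> set (concat xss)"
    obtain j where j: "j < length xss" "y \<in> set (xss!j)" using y
      by (metis in_set_conv_nth set_concat UN_E)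
    show "P x y" using Cons.prems(2)[rule_format, of 0 "Suc j"] x j by simp
  qed
  ultimately show ?case using Cons.prems(1) by (simp add: sorted_wrt_append)
qed

fun keyless :: "(nat \<Rightarrow> nat) \<Rightarrow> strand \<Rightarrow> strand \<Rightarrow> bool" where
  "keyless \<kappa> (Rd p) (Rd p') = (\<kappa> p < \<kappa> p' \<or> (\<kappa> p = \<kappa> p' \<and> p < p'))"
| "keyless \<kappa> (Rd p) (Blk k) = (\<kappa> p < k)"
| "keyless \<kappa> (Blk k) (Rd p) = (k \<le> \<kappa> p)"
| "keyless \<kappa> (Blk k) (Blk k') = (k < k')"

lemma keyless_asym: "keyless \<kappa> s s' \<Longrightarrow> \<not> keyless \<kappa> s' s"
  by (cases s; cases s'; auto)

lemma keyless_irrefl: "\<not> keyless \<kappa> s s"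
  by (cases s; auto)

lemma strand_seq_sorted: "sorted_wrt (keyless \<kappa>) (strand_seq n l \<kappa>)"
  unfolding strand_seq_def
proof (rule sorted_wrt_concatI; intro allI impI ballI)
  fix xs assume "xs \<in> set (map (\<lambda>k. map Rd (filter (\<lambda>p. \<kappa> p = k) [1..<l+1]) @ (if k < n then [Blk (k+1)] else [])) [0..<n+1])"
  then obtain k where xs: "xs = map Rd (filter (\<lambda>p. \<kappa> p = k) [1..<l+1]) @ (if k < n then [Blk (k+1)] else [])"
    unfolding set_map by blast
  have "sorted_wrt (<) (filter (\<lambda>p. \<kappa> p = k) [1..<l+1])"
    by (rule sorted_wrt_filter, rule sorted_wrt_upt)
  then have "sorted_wrt (keyless \<kappa>) (map Rd (filter (\<lambda>p. \<kappa> p = k) [1..<l+1]))"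
    by (simp add: sorted_wrt_map del: upt_Suc) (erule sorted_wrt_mono_rel[rotated], auto simp del: upt_Suc)
  then show "sorted_wrt (keyless \<kappa>) xs" unfolding xs
    by (auto simp: sorted_wrt_append)
next
  fix i j x y
  assume ij: "i < j \<and> j < length (map (\<lambda>k. map Rd (filter (\<lambda>p. \<kappa> p = k) [1..<l+1]) @ (if k < n then [Blk (k+1)] else [])) [0..<n+1])"
    and x: "x \<in> set (map (\<lambda>k. map Rd (filter (\<lambda>p. \<kappa> p = k) [1..<l+1]) @ (if k < n then [Blk (k+1)] else [])) [0..<n+1] ! i)"
    and y: "y \<in> set (map (\<lambda>k. map Rd (filter (\<lambda>p. \<kappa> p = k) [1..<l+1]) @ (if k < n then [Blk (k+1)] else [])) [0..<n+1] ! j)"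
  have jn: "j < n + 1" using ij by simp
  have x': "(\<exists>p. x = Rd p \<and> \<kappa> p = i) \<or> x = Blk (i+1)" using x ij by (auto simp del: upt_Suc split: if_splits)
  have y': "(\<exists>p. y = Rd p \<and> \<kappa> p = j) \<or> y = Blk (j+1)" using y ij by (auto simp del: upt_Suc split: if_splits)
  show "keyless \<kappa> x y" using x' y' ij by auto
qed

lemma strand_seq_set:
  "set (strand_seq n l \<kappa>) = Blk ` {1..n} \<union> Rd ` {p. 1 \<le> p \<and> p \<le> l \<and> \<kappa> p \<le> n}"
  unfolding strand_seq_def
  apply (auto simp del: upt_Suc split: if_splits)
  subgoal for k by (rule bexI[of _ "k - 1"]) auto
  subgoal for p by (rule bexI[of _ "\<kappa> p"]) auto
  done

lemma sorted_wrt_irrefl_distinct: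
  assumes "sorted_wrt P xs" "\<And>x. \<not> P x x" shows "distinct xs"
  using assms by (induction xs) auto



lemma odd_par_int: "odd (2 * q + par_int b) = b"
  by (simp add: par_int_def)

lemma red_list_par: "x \<in> set (red_list par vs R) \<Longrightarrow> odd (snd x) = par (fst x)"
  unfolding red_list_def Let_def by (auto simp: par_int_def split: if_splits)

lemma red_list_sorted:
  assumes "\<forall>a b. a < b \<and> b < length vs \<and> par (vs ! a) \<longrightarrow> par (vs ! b)"
  shows "sorted (map snd (red_list par vs R))"
proof -
  define N where "N = sum_list (map (\<lambda>v. sum_mset (image_mset abs (R v))) vs)"
  define blk where "blk q = concat (map (\<lambda>v. replicate (count (R v) (2 * q + par_int (par v))) (2 * q + par_int (par v))) vs)" for q :: int
  have eq: "map snd (red_list par vs R) = concat (map blk [-N..N])"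
    unfolding red_list_def Let_def N_def[symmetric] blk_def
    by (simp add: map_concat comp_def)
  have inblk: "x \<in> set (blk q) \<Longrightarrow> 2 * q \<le> x \<and> x \<le> 2 * q + 1" for x q
    unfolding blk_def by (auto simp: par_int_def split: if_splits)
  have sblk: "sorted_wrt (\<le>) (blk q)" for q
    unfolding blk_def
  proof (rule sorted_wrt_concatI; intro allI impI ballI)
    fix xs assume "xs \<in> set (map (\<lambda>v. replicate (count (R v) (2 * q + par_int (par v))) (2 * q + par_int (par v))) vs)"
    then show "sorted_wrt (\<le>) xs" by (auto simp: sorted_wrt_iff_nth_less)
  next
    fix i j x y
    assume ij: "i < j \<and> j < length (map (\<lambda>v. replicate (count (R v) (2 * q + par_int (par v))) (2 * q + par_int (par v))) vs)"
      and x: "x \<in> set (map (\<lambda>v. replicate (count (R v) (2 * q + par_int (par v))) (2 * q + par_int (par v))) vs ! i)"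
      and y: "y \<in> set (map (\<lambda>v. replicate (count (R v) (2 * q + par_int (par v))) (2 * q + par_int (par v))) vs ! j)"
    have "x = 2 * q + par_int (par (vs ! i))" "y = 2 * q + par_int (par (vs ! j))"
      using x y ij by (auto split: if_splits)
    moreover have "par (vs ! i) \<longrightarrow> par (vs ! j)" using assms ij by auto
    ultimately show "x \<le> y" by (auto simp: par_int_def)
  qed
  have "sorted_wrt (\<le>) (concat (map blk [-N..N]))"
  proof (rule sorted_wrt_concatI; intro allI impI ballI)
    fix xs assume "xs \<in> set (map blk [-N..N])"
    then show "sorted_wrt (\<le>) xs" using sblk by auto
  next
    fix i j x y
    assume ij: "i < j \<and> j < length (map blk [-N..N])"
      and x: "x \<in> set (map blk [-N..N] ! i)" and y: "y \<in> set (map blk [-N..N] ! j)"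
    have "x \<in> set (blk (-N + int i))" "y \<in> set (blk (-N + int j))"
      using x y ij by (auto simp: nth_upto)
    then have "x \<le> 2 * (-N + int i) + 1" "2 * (-N + int j) \<le> y" using inblk by blast+
    moreover have "int i + 1 \<le> int j" using ij by simp
    ultimately show "x \<le> y" by simp
  qed
  then show ?thesis using eq by simp
qed

lemma count_sum_param:
  fixes M :: "int multiset"
  assumes "\<forall>x\<in>#M. odd x = b" "\<forall>x\<in>#M. \<bar>x\<bar> \<le> N"
  shows "(\<Sum>q\<in>{-N..N}. count M (2 * q + par_int b)) = size M"
proof -
  let ?f = "\<lambda>q. 2 * q + par_int b"
  have inj: "inj_on ?f {-N..N}" by (auto simp: inj_on_def)
  have "(\<Sum>q\<in>{-N..N}. count M (?f q)) = (\<Sum>x\<in>?f ` {-N..N}. count M x)"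
    using sum.reindex[OF inj, of "count M"] by (simp add: comp_def)
  also have "\<dots> = (\<Sum>x\<in>set_mset M. count M x)"
  proof (rule sum.mono_neutral_right)
    show "finite (?f ` {-N..N})" by simp
    show "set_mset M \<subseteq> ?f ` {-N..N}"
    proof
      fix x assume x: "x \<in> set_mset M"
      have "x = ?f ((x - par_int b) div 2)" using assms(1) x by (auto simp: par_int_def elim!: oddE evenE)
      moreover have "(x - par_int b) div 2 \<in> {-N..N}"
      proof -
        have "\<bar>x\<bar> \<le> N" "odd x = b" using assms x by auto
        then show ?thesis by (cases b) (simp_all add: par_int_def; presburger)+
      qed
      ultimately show "x \<in> ?f ` {-N..N}" by blast
    qed
    show "\<forall>i\<in>?f ` {-N..N} - set_mset M. count M i = 0" by (simp add: count_eq_zero_iff)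
  qed
  also have "\<dots> = size M" by (simp add: size_multiset_overloaded_eq)
  finally show ?thesis .
qed

lemma sum_mset_abs_nonneg: "0 \<le> sum_mset (image_mset abs (M::int multiset))"
  by (induction M) auto

lemma abs_le_sum_mset: "x \<in># M \<Longrightarrow> \<bar>x\<bar> \<le> sum_mset (image_mset abs (M::int multiset))"
  by (induction M) (auto simp: add_increasing sum_mset_abs_nonneg add_increasing2)

lemma red_list_length:
  assumes "distinct vs" "set vs = I" "\<forall>v\<in>I. \<forall>x\<in>#R v. odd x = par v"
  shows "length (red_list par vs R) = ell I R"
proof -
  define N where "N = sum_list (map (\<lambda>v. sum_mset (image_mset abs (R v))) vs)"
  have Nb: "\<bar>x\<bar> \<le> N" if "v \<in> I" "x \<in># R v" for v x
  proof -
    have "\<bar>x\<bar> \<le> sum_mset (image_mset abs (R v))"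
      using that(2) by (rule abs_le_sum_mset)
    also have "\<dots> \<le> N" unfolding N_def
      using that(1) assms(2) by (intro member_le_sum_list) (auto intro: sum_mset_abs_nonneg)
    finally show ?thesis .
  qed
  have "length (red_list par vs R) = (\<Sum>q\<in>{-N..N}. \<Sum>v\<in>I. count (R v) (2 * q + par_int (par v)))"
    unfolding red_list_def Let_def N_def[symmetric]
    by (simp add: length_concat comp_def sum_list_distinct_conv_sum_set assms)
  also have "\<dots> = (\<Sum>v\<in>I. \<Sum>q\<in>{-N..N}. count (R v) (2 * q + par_int (par v)))"
    by (rule sum.swap)
  also have "\<dots> = (\<Sum>v\<in>I. size (R v))"
    by (rule sum.cong[OF refl], rule count_sum_param) (use assms Nb in auto)
  finally show ?thesis by (simp add: ell_def)
qed
lemma dc_odd: "odd (delta_consec par is lab s s') \<longleftrightarrow> strand_par par is lab s \<noteq> strand_par par is lab s'"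
  unfolding delta_consec_def by auto

lemma dc_blk_rd: "1 \<le> delta_consec par is lab (Blk k) (Rd p)"
  unfolding delta_consec_def by auto

lemma dc_bound:
  fixes x y :: int
  assumes "odd x = strand_par par is lab s" "odd y = strand_par par is lab s'" "x \<le> y"
    "\<And>k p. s = Blk k \<Longrightarrow> s' = Rd p \<Longrightarrow> x < y"
  shows "int (delta_consec par is lab s s') \<le> y - x"
proof (cases "(\<exists>k. s = Blk k) \<and> (\<exists>p. s' = Rd p) \<and> strand_par par is lab s = strand_par par is lab s'")
  case True
  then obtain k p where "s = Blk k" "s' = Rd p" by blast
  then have "x < y" using assms(4) by blast
  moreover have "even (y - x)" using True assms(1,2) by auto
  ultimately have "2 \<le> y - x" by presburger
  then show ?thesis using True unfolding delta_consec_def by simp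
next
  case False
  show ?thesis
  proof (cases "strand_par par is lab s \<noteq> strand_par par is lab s'")
    case True
    then have "x \<noteq> y" using assms(1,2) by auto
    then show ?thesis using False True assms(3) unfolding delta_consec_def by auto
  next
    case False2: False
    then show ?thesis using False assms(3) unfolding delta_consec_def by auto
  qed
qed


theorem lemma3p25:
  fixes I :: "'v set" and E :: "('v \<times> 'v) set" and par :: "'v \<Rightarrow> bool"
    and vs :: "'v list" and R :: "'v \<Rightarrow> int multiset"
    and "is" :: "'v list" and \<kappa> :: "nat \<Rightarrow> nat"
  assumes "finite I"
    and "E \<subseteq> I \<times> I" and "sym E" and "irrefl E"
    and "\<forall>(u, v)\<in>E. par u \<noteq> par v"
    and "distinct vs" and "set vs = I"
    and "\<forall>a b. a < b \<and> b < length vs \<and> par (vs ! a) \<longrightarrow> par (vs ! b)"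
    and "\<forall>v\<in>I. \<forall>x\<in>#R v. odd x = par v"
    and "set is \<subseteq> I"
    and "\<forall>p p'. 1 \<le> p \<and> p \<le> p' \<and> p' \<le> ell I R \<longrightarrow> \<kappa> p \<le> \<kappa> p'"
    and "\<forall>p. 1 \<le> p \<and> p \<le> ell I R \<longrightarrow> \<kappa> p \<le> length is"
  shows "(\<exists>a. compatible_longitude I par vs R is \<kappa> a) \<longleftrightarrow> is_parity_datum I par vs R is \<kappa>"
proof -
  define n where "n = length is"
  define l where "l = ell I R"
  define sq where "sq = strand_seq n l \<kappa>"
  define L where "L = length sq"
  define lab where "lab = red_lab par vs R"
  define r where "r = red_lon par vs R"
  define sp where "sp = strand_par par is lab"
  define dc where "dc = delta_consec par is lab"
  define D where "D i j = (\<Sum>a\<in>{i..<j}. dc (sq ! a) (sq ! (a+1)))" for i j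
  define pos where "pos = strand_pos sq"
  have kmono: "\<And>p p'. 1 \<le> p \<Longrightarrow> p \<le> p' \<Longrightarrow> p' \<le> l \<Longrightarrow> \<kappa> p \<le> \<kappa> p'"
    using assms(11) l_def by blast
  have kle: "\<And>p. 1 \<le> p \<Longrightarrow> p \<le> l \<Longrightarrow> \<kappa> p \<le> n"
    using assms(12) l_def n_def by blast
  have sorted_sq: "sorted_wrt (keyless \<kappa>) sq" unfolding sq_def by (rule strand_seq_sorted)
  have dist: "distinct sq" using sorted_sq keyless_irrefl by (rule sorted_wrt_irrefl_distinct)
  have memB: "Blk k \<in> set sq \<longleftrightarrow> 1 \<le> k \<and> k \<le> n" for k
    unfolding sq_def strand_seq_set by auto
  have memR: "Rd p \<in> set sq \<longleftrightarrow> 1 \<le> p \<and> p \<le> l" for p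
  proof -
    have "Rd p \<in> set sq \<longleftrightarrow> 1 \<le> p \<and> p \<le> l \<and> \<kappa> p \<le> n"
      unfolding sq_def strand_seq_set by auto
    then show ?thesis using kle[of p] by blast
  qed
  have posI: "pos s < L \<and> sq ! pos s = s" if sin: "s \<in> set sq" for s
  proof -
    obtain i where i0: "i < length sq" "sq ! i = s" using sin by (auto simp: in_set_conv_nth)
    then have i: "i < L" "sq ! i = s" by (simp_all add: L_def)
    have "pos s = i" unfolding pos_def strand_pos_def
    proof (rule Least_equality)
      show "i < length sq \<and> sq ! i = s" using i L_def by simp
      fix y assume y: "y < length sq \<and> sq ! y = s"
      then have "y = i" using nth_eq_iff_index_eq[OF dist, of y i] i L_def by simp
      then show "i \<le> y" by simp
    qed
    then show ?thesis using i by simp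
  qed
  have posnth: "pos (sq ! i) = i" if "i < L" for i
  proof -
    have "sq ! i \<in> set sq" using that L_def by simp
    then have "pos (sq ! i) < L" "sq ! pos (sq ! i) = sq ! i" using posI by auto
    then show ?thesis using nth_eq_iff_index_eq[OF dist, of "pos (sq ! i)" i] that L_def by simp
  qed
  have keyI: "keyless \<kappa> (sq ! i) (sq ! j)" if "i < j" "j < L" for i j
    using sorted_sq that L_def by (simp add: sorted_wrt_nth_less)
  have posless: "pos s < pos s'" if "s \<in> set sq" "s' \<in> set sq" "keyless \<kappa> s s'" for s s'
  proof (rule ccontr)
    assume "\<not> pos s < pos s'"
    then have "pos s' < pos s \<or> pos s' = pos s" by auto
    then show False
    proof
      assume "pos s' < pos s"
      then have "keyless \<kappa> s' s" using keyI[of "pos s'" "pos s"] posI that by metis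
      then show False using keyless_asym that(3) by blast
    next
      assume "pos s' = pos s"
      then have "s = s'" using posI that by metis
      then show False using keyless_irrefl that(3) by blast
    qed
  qed
  have lenrl: "length (red_list par vs R) = l"
    unfolding l_def using assms(6,7,9) by (rule red_list_length)
  have rsorted: "r p \<le> r p'" if "1 \<le> p" "p \<le> p'" "p' \<le> l" for p p'
  proof -
    have "map snd (red_list par vs R) ! (p - 1) \<le> map snd (red_list par vs R) ! (p' - 1)"
      using red_list_sorted[OF assms(8), of R] that lenrl by (intro sorted_nth_mono) auto
    then show ?thesis using that lenrl unfolding r_def red_lon_def by simp
  qed
  have rpar: "odd (r p) = sp (Rd p)" if "1 \<le> p" "p \<le> l" for p
  proof -
    have "red_list par vs R ! (p - 1) \<in> set (red_list par vs R)" using that lenrl by simp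
    then have "odd (snd (red_list par vs R ! (p - 1))) = par (fst (red_list par vs R ! (p - 1)))"
      by (rule red_list_par)
    then show ?thesis unfolding r_def sp_def strand_par_def lab_def red_lon_def red_lab_def
      by simp
  qed
  have rdless: "p < p'" if "keyless \<kappa> (Rd p) (Rd p')" "1 \<le> p" "p \<le> l" "1 \<le> p'" "p' \<le> l" for p p'
  proof (rule ccontr)
    assume np: "\<not> p < p'"
    then have "\<kappa> p' \<le> \<kappa> p" using kmono that by simp
    then show False using that(1) np by auto
  qed
  have Dsuc: "D i (Suc x) = D i x + dc (sq ! x) (sq ! (x+1))" if "i \<le> x" for i x
    unfolding D_def using that by (simp add: sum.atLeastLessThan_Suc)
  have Dodd: "odd (D i j) \<longleftrightarrow> sp (sq ! i) \<noteq> sp (sq ! j)" if "i \<le> j" for i j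
    using that
  proof (induction j)
    case 0 then show ?case by (simp add: D_def)
  next
    case (Suc j)
    show ?case
    proof (cases "i = Suc j")
      case True then show ?thesis by (simp add: D_def)
    next
      case False
      then have "i \<le> j" using Suc by simp
      then show ?thesis using Suc.IH Dsuc[of i j] dc_odd[of par "is" lab] unfolding dc_def sp_def by auto
    qed
  qed
  show ?thesis
  proof
    assume "\<exists>a. compatible_longitude I par vs R is \<kappa> a"
    then obtain a where ca: "compatible_longitude I par vs R is \<kappa> a" by blast
    have alen: "length a = n" and apar: "\<And>k. k < n \<Longrightarrow> odd (a ! k) = par (is ! k)"
      and amono1: "\<And>k. k + 1 < n \<Longrightarrow> a ! k \<le> a ! (k+1)"
      and acmp: "\<And>k p. 1 \<le> k \<Longrightarrow> k \<le> n \<Longrightarrow> 1 \<le> p \<Longrightarrow> p \<le> l \<Longrightarrow> (a ! (k-1) \<ge> r p \<longleftrightarrow> k > \<kappa> p)"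
      using ca unfolding compatible_longitude_def n_def l_def r_def by auto
    have amono: "a ! i \<le> a ! j" if "i \<le> j" "j < n" for i j
      using that
    proof (induction j)
      case 0 then show ?case by simp
    next
      case (Suc j)
      then show ?case
        using amono1[of j] by (cases "i = Suc j") auto
    qed
    define v where "v s = (case s of Blk k \<Rightarrow> a ! (k-1) | Rd p \<Rightarrow> r p)" for s
    have vpar: "odd (v s) = sp s" if "s \<in> set sq" for s
    proof (cases s)
      case (Blk k)
      then have "1 \<le> k" "k \<le> n" using that memB by auto
      then have "odd (a ! (k-1)) = par (is ! (k-1))" using apar[of "k-1"] by simp
      then show ?thesis using Blk unfolding v_def sp_def strand_par_def by simp
    next
      case (Rd p)
      then show ?thesis using that memR rpar unfolding v_def by auto
    qed
    have step: "int (dc (sq ! i) (sq ! (i+1))) \<le> v (sq ! (i+1)) - v (sq ! i)" if "i + 1 < L" for i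
    proof -
      have m1: "sq ! i \<in> set sq" and m2: "sq ! (i+1) \<in> set sq" using that L_def by auto
      have kl: "keyless \<kappa> (sq ! i) (sq ! (i+1))" using keyI that by simp
      have ord: "v (sq ! i) \<le> v (sq ! (i+1)) \<and> ((\<exists>k. sq ! i = Blk k) \<and> (\<exists>p. sq ! (i+1) = Rd p) \<longrightarrow> v (sq ! i) < v (sq ! (i+1)))"
      proof (cases "sq ! i"; cases "sq ! (i+1)")
        fix k k' assume A: "sq ! i = Blk k" "sq ! (i+1) = Blk k'"
        have "k < k'" using kl A by simp
        moreover have "1 \<le> k" "k' \<le> n" using m1 m2 A memB by auto
        ultimately have "a ! (k-1) \<le> a ! (k'-1)" using amono[of "k-1" "k'-1"] by simp
        then show ?thesis using A by (simp add: v_def)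
      next
        fix k p assume A: "sq ! i = Blk k" "sq ! (i+1) = Rd p"
        have "k \<le> \<kappa> p" using kl A by simp
        moreover have "1 \<le> k" "k \<le> n" using m1 A memB by auto
        moreover have "1 \<le> p" "p \<le> l" using m2 A memR by auto
        ultimately have "a ! (k-1) < r p" using acmp[of k p] by simp
        then show ?thesis using A by (simp add: v_def)
      next
        fix p k assume A: "sq ! i = Rd p" "sq ! (i+1) = Blk k"
        have "\<kappa> p < k" using kl A by simp
        moreover have "1 \<le> k" "k \<le> n" using m2 A memB by auto
        moreover have "1 \<le> p" "p \<le> l" using m1 A memR by auto
        ultimately have "r p \<le> a ! (k-1)" using acmp[of k p] by simp
        then show ?thesis using A by (simp add: v_def)
      next
        fix p p' assume A: "sq ! i = Rd p" "sq ! (i+1) = Rd p'"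
        have "1 \<le> p" "p \<le> l" using m1 A memR by auto
        moreover have "1 \<le> p'" "p' \<le> l" using m2 A memR by auto
        ultimately have "p < p'" using kl A rdless by simp
        then have "r p \<le> r p'" using rsorted \<open>1 \<le> p\<close> \<open>p' \<le> l\<close> by simp
        then show ?thesis using A by (simp add: v_def)
      qed
      show ?thesis unfolding dc_def
        by (rule dc_bound) (use vpar[OF m1] vpar[OF m2] ord in \<open>auto simp: sp_def\<close>)
    qed
    have tele: "int (D i j) \<le> v (sq ! j) - v (sq ! i)" if "i \<le> j" "j < L" for i j
      using that
    proof (induction j)
      case 0 then show ?case by (simp add: D_def)
    next
      case (Suc j)
      show ?case
      proof (cases "i = Suc j")
        case True then show ?thesis by (simp add: D_def)
      next
        case False
        then have "i \<le> j" using Suc by simp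
        then show ?thesis using Suc.IH Suc.prems Dsuc[of i j] step[of j] by simp
      qed
    qed
    show "is_parity_datum I par vs R is \<kappa>"
      unfolding is_parity_datum_def
    proof (intro allI impI)
      fix p p' assume pp: "1 \<le> p \<and> p < p' \<and> p' \<le> ell I R"
      have m: "Rd p \<in> set sq" "Rd p' \<in> set sq" using pp memR l_def by auto
      have eqD: "delta_red par is (red_lab par vs R) (strand_seq (length is) (ell I R) \<kappa>) p p' = D (pos (Rd p)) (pos (Rd p'))"
        unfolding delta_red_def D_def pos_def sq_def n_def l_def dc_def lab_def ..
      show "int (delta_red par is (red_lab par vs R) (strand_seq (length is) (ell I R) \<kappa>) p p')
          \<le> \<bar>red_lon par vs R p - red_lon par vs R p'\<bar>"
      proof (cases "pos (Rd p) \<le> pos (Rd p')")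
        case True
        then have "int (D (pos (Rd p)) (pos (Rd p'))) \<le> v (Rd p') - v (Rd p)"
          using tele[of "pos (Rd p)" "pos (Rd p')"] posI m by simp
        then show ?thesis using eqD unfolding v_def r_def by simp
      next
        case False
        then show ?thesis using eqD by (simp add: D_def)
      qed
    qed
  next
    assume pd: "is_parity_datum I par vs R is \<kappa>"
    define red where "red x = (\<exists>p. sq ! x = Rd p)" for x
    define rv where "rv x = (case sq ! x of Rd p \<Rightarrow> r p | Blk k \<Rightarrow> 0)" for x
    have redmem: "1 \<le> p \<and> p \<le> l \<and> rv x = r p" if "x < L" "sq ! x = Rd p" for x p
    proof -
      have "Rd p \<in> set sq" using that(2) nth_mem[of x sq] that(1) L_def by simp
      then show ?thesis using memR that by (simp add: rv_def)
    qed
    have rvpar: "odd (rv x) = sp (sq ! x)" if "x < L" "red x" for x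
      using that redmem rpar unfolding red_def by force
    have PC: "int (D i j) \<le> rv j - rv i" if ij: "i < j" "j < L" "red i" "red j" for i j
    proof -
      obtain p p' where pp: "sq ! i = Rd p" "sq ! j = Rd p'" using ij(3,4) red_def by auto
      have iL: "i < L" using ij by simp
      have p1: "1 \<le> p" "p \<le> l" "rv i = r p" using redmem[OF iL pp(1)] by blast+
      have p2: "1 \<le> p'" "p' \<le> l" "rv j = r p'" using redmem[OF ij(2) pp(2)] by blast+
      have "p < p'" using rdless[OF _ p1(1,2) p2(1,2)] keyI[OF ij(1,2)] pp by simp
      then have "int (delta_red par is (red_lab par vs R) (strand_seq (length is) (ell I R) \<kappa>) p p')
          \<le> \<bar>red_lon par vs R p - red_lon par vs R p'\<bar>"
        using pd[unfolded is_parity_datum_def, rule_format, of p p'] p1 p2 unfolding l_def by simp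
      moreover have "delta_red par is (red_lab par vs R) (strand_seq (length is) (ell I R) \<kappa>) p p' = D i j"
      proof -
        have "pos (Rd p) = i" "pos (Rd p') = j" using posnth[OF iL] posnth[OF ij(2)] pp by simp_all
        then show ?thesis
          unfolding delta_red_def D_def pos_def sq_def n_def l_def dc_def lab_def by simp
      qed
      moreover have "r p \<le> r p'" using rsorted p1 p2 \<open>p < p'\<close> by simp
      ultimately show ?thesis using p1 p2 unfolding r_def by simp
    qed
    define K where "K = (\<Sum>x<L. \<bar>rv x\<bar>) + int (D 0 L) + 1"
    define base where "base = par_int (sp (sq ! 0)) - 2 * K"
    define S where "S x = insert (base + int (D 0 x)) ((\<lambda>i. rv i + int (D i x)) ` {i. i \<le> x \<and> red i})" for x
    define val where "val x = Max (S x)" for x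
    have Sfin: "finite (S x)" for x unfolding S_def by simp
    have valin: "val x \<in> S x" for x unfolding val_def by (rule Max_in[OF Sfin]) (simp add: S_def)
    have valge: "e \<le> val x" if "e \<in> S x" for e x unfolding val_def using Sfin that by simp
    have Dmono: "D i j \<le> D i k" if "j \<le> k" for i j k
      unfolding D_def using that by (intro sum_mono2) auto
    have Dzero: "D i i = 0" for i by (simp add: D_def)
    have valpar: "odd (val x) = sp (sq ! x)" if xL: "x < L" for x
    proof -
      have "odd e = sp (sq ! x)" if "e \<in> S x" for e
      proof -
        have "e = base + int (D 0 x) \<or> (\<exists>i. i \<le> x \<and> red i \<and> e = rv i + int (D i x))"
          using that unfolding S_def by auto
        then show ?thesis
        proof
          assume e: "e = base + int (D 0 x)"
          have "odd base = sp (sq ! 0)" unfolding base_def by (simp add: par_int_def)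
          moreover have "odd (D 0 x) \<longleftrightarrow> sp (sq ! 0) \<noteq> sp (sq ! x)" using Dodd by simp
          ultimately show ?thesis using e by auto
        next
          assume "\<exists>i. i \<le> x \<and> red i \<and> e = rv i + int (D i x)"
          then obtain i where i: "i \<le> x" "red i" "e = rv i + int (D i x)" by blast
          have "odd (rv i) = sp (sq ! i)" using rvpar i xL by simp
          moreover have "odd (D i x) \<longleftrightarrow> sp (sq ! i) \<noteq> sp (sq ! x)" using Dodd i by simp
          ultimately show ?thesis using i by auto
        qed
      qed
      then show ?thesis using valin by blast
    qed
    have valred: "val j = rv j" if "j < L" "red j" for j
    proof -
      have "rv j \<in> S j" unfolding S_def using that Dzero by force
      moreover have "e \<le> rv j" if "e \<in> S j" for e
      proof -
        have "e = base + int (D 0 j) \<or> (\<exists>i. i \<le> j \<and> red i \<and> e = rv i + int (D i j))"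
          using that unfolding S_def by auto
        then show ?thesis
        proof
          assume e: "e = base + int (D 0 j)"
          have "\<bar>rv j\<bar> \<le> (\<Sum>x<L. \<bar>rv x\<bar>)"
            using \<open>j < L\<close> by (intro member_le_sum) auto
          moreover have "D 0 j \<le> D 0 L" using Dmono \<open>j < L\<close> by simp
          ultimately show ?thesis using e unfolding base_def K_def par_int_def by auto
        next
          assume "\<exists>i. i \<le> j \<and> red i \<and> e = rv i + int (D i j)"
          then obtain i where i: "i \<le> j" "red i" "e = rv i + int (D i j)" by blast
          show ?thesis
          proof (cases "i = j")
            case True then show ?thesis using i Dzero by simp
          next
            case False
            then show ?thesis using PC[of i j] i \<open>j < L\<close> \<open>red j\<close> by simp
          qed
        qed
      qed
      ultimately show ?thesis unfolding val_def using Sfin by (intro Max_eqI) auto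
    qed
    have valstep: "val x + int (dc (sq ! x) (sq ! (x+1))) \<le> val (x+1)" for x
    proof -
      have "val x + int (dc (sq ! x) (sq ! (x+1))) \<in> S (x+1)"
      proof -
        have "val x = base + int (D 0 x) \<or> (\<exists>i. i \<le> x \<and> red i \<and> val x = rv i + int (D i x))"
          using valin[of x] unfolding S_def by auto
        then show ?thesis
        proof
          assume e: "val x = base + int (D 0 x)"
          then show ?thesis unfolding S_def using Dsuc[of 0 x] by simp
        next
          assume "\<exists>i. i \<le> x \<and> red i \<and> val x = rv i + int (D i x)"
          then obtain i where i: "i \<le> x" "red i" "val x = rv i + int (D i x)" by blast
          then have "val x + int (dc (sq ! x) (sq ! (x+1))) = rv i + int (D i (x+1))"
            using Dsuc[of i x] by simp
          moreover have "rv i + int (D i (x+1)) \<in> (\<lambda>i. rv i + int (D i (x+1))) ` {i. i \<le> x+1 \<and> red i}"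
            using i by (intro imageI) simp
          ultimately show ?thesis unfolding S_def by simp
        qed
      qed
      then show ?thesis by (rule valge)
    qed
    have valmono: "val x + int (D x y) \<le> val y" if "x \<le> y" for x y
      using that
    proof (induction y)
      case 0 then show ?case by (simp add: Dzero)
    next
      case (Suc y)
      show ?case
      proof (cases "x = Suc y")
        case True then show ?thesis by (simp add: Dzero)
      next
        case False
        then have "x \<le> y" using Suc by simp
        then show ?thesis using Suc.IH Dsuc[of x y] valstep[of y] by simp
      qed
    qed
    have valstrict: "val b < val j" if "b < j" "j < L" "\<exists>k. sq ! b = Blk k" "red j" for b j
      using that
    proof (induction j)
      case 0 then show ?case by simp
    next
      case (Suc j)
      show ?case
      proof (cases "\<exists>k. sq ! j = Blk k")
        case True
        then obtain k where k: "sq ! j = Blk k" by blast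
        obtain p where p: "sq ! Suc j = Rd p" using Suc.prems red_def by auto
        have "1 \<le> dc (sq ! j) (sq ! (j+1))" using k p dc_blk_rd unfolding dc_def by simp
        moreover have "val b \<le> val j" using valmono[of b j] Suc.prems by simp
        ultimately show ?thesis using valstep[of j] by simp
      next
        case False
        then have rj: "red j" unfolding red_def by (cases "sq ! j") auto
        have "b \<noteq> j" using False Suc.prems by auto
        then have "val b < val j" using Suc.IH Suc.prems rj by simp
        then show ?thesis using valmono[of j "Suc j"] by simp
      qed
    qed
    define a where "a = map (\<lambda>k. val (pos (Blk (k+1)))) [0..<n]"
    have aget: "a ! (k-1) = val (pos (Blk k))" if "1 \<le> k" "k \<le> n" for k
    proof -
      have "k - 1 < n" using that by simp
      then show ?thesis unfolding a_def using that by simp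
    qed
    have "compatible_longitude I par vs R is \<kappa> a"
      unfolding compatible_longitude_def
    proof (intro conjI allI impI)
      show "length a = length is" unfolding a_def n_def by simp
    next
      fix k assume k: "k < length is"
      have m: "Blk (k+1) \<in> set sq" using memB k n_def by simp
      have "odd (a ! k) = sp (sq ! pos (Blk (k+1)))" unfolding a_def using k n_def valpar posI[OF m] by simp
      also have "\<dots> = par (is ! k)" using posI[OF m] unfolding sp_def strand_par_def by simp
      finally show "odd (a ! k) = par (is ! k)" .
    next
      fix k assume k: "k + 1 < length is"
      have m: "Blk (k+1) \<in> set sq" "Blk (k+2) \<in> set sq" using memB k n_def by auto
      have "pos (Blk (k+1)) < pos (Blk (k+2))" using posless m by simp
      then have "val (pos (Blk (k+1))) \<le> val (pos (Blk (k+2)))"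
        using valmono[of "pos (Blk (k+1))" "pos (Blk (k+2))"] by simp
      then show "a ! k \<le> a ! (k+1)" unfolding a_def using k n_def by (simp add: add.commute)
    next
      fix k p assume kp: "1 \<le> k \<and> k \<le> length is \<and> 1 \<le> p \<and> p \<le> ell I R"
      have mk: "Blk k \<in> set sq" using memB kp n_def by simp
      have mp: "Rd p \<in> set sq" using memR kp l_def by simp
      have vr: "val (pos (Rd p)) = red_lon par vs R p"
        using valred[of "pos (Rd p)"] posI[OF mp] redmem[of "pos (Rd p)" p] unfolding red_def r_def by auto
      have ak: "a ! (k-1) = val (pos (Blk k))" using aget kp n_def by simp
      show "(red_lon par vs R p \<le> a ! (k - 1)) = (\<kappa> p < k)"
      proof (cases "\<kappa> p < k")
        case True
        then have "pos (Rd p) < pos (Blk k)" using posless mk mp by simp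
        then have "val (pos (Rd p)) \<le> val (pos (Blk k))" using valmono[of "pos (Rd p)" "pos (Blk k)"] by simp
        then show ?thesis using True vr ak by simp
      next
        case False
        then have "pos (Blk k) < pos (Rd p)" using posless mk mp by simp
        then have "val (pos (Blk k)) < val (pos (Rd p))"
          using valstrict[of "pos (Blk k)" "pos (Rd p)"] posI[OF mk] posI[OF mp] unfolding red_def by auto
        then show ?thesis using False vr ak by simp
      qed
    qed
    then show "\<exists>a. compatible_longitude I par vs R is \<kappa> a" by blast
  qed
qed

end
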